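(* Let $\mathcal{X}=\{x_k\}_{k=1}^m$ be a frame for a real or complex $n$-dimensional Hilbert space $\mathbb{H}^n$. Then the following are equivalent: (1) $\mathcal{X}$ is injective; (2) for every orthonormal basis $\mathcal{E}=\{e_j\}_{j=1}^n$ of $\mathbb{H}^n$, \[ \mathrm{span}\{(|\langle x_k,e_1\rangle|^2,|\langle x_k,e_2\rangle|^2,\dots,|\langle x_k,e_n\rangle|^2):k=1,\dots,m\}=\mathbb{R}^n.\]
   Context: A family $\{x_k\}$ of vectors in a Hilbert space is called injective if whenever a self-adjoint operator $T$ satisfies $\langle Tx_k,x_k\rangle=0$ for all $k$, then $T=0$. *)

theory Defs
  imports "HOL-Analysis.Analysis"
begin

text \<open>The Hilbert space H^n is modelled as 'F ^ 'n with 'F = real or 'F = complex,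
  where the finite type 'n indexes coordinates (so n = CARD('n)).
  Operators on H^n are n x n matrices acting via *v.\<close>

section \<open>Real case\<close>

definition r_frame :: "(nat \<Rightarrow> real ^ 'n) \<Rightarrow> nat \<Rightarrow> bool" where
  "r_frame x m \<longleftrightarrow> (\<exists>A B. 0 < A \<and> 0 < B \<and>
     (\<forall>v. A * (norm v)\<^sup>2 \<le> (\<Sum>k\<in>{1..m}. (v \<bullet> x k)\<^sup>2)
        \<and> (\<Sum>k\<in>{1..m}. (v \<bullet> x k)\<^sup>2) \<le> B * (norm v)\<^sup>2))"

definition r_self_adjoint :: "real ^ 'n ^ 'n \<Rightarrow> bool" where
  "r_self_adjoint T \<longleftrightarrow> (\<forall>u v. (T *v u) \<bullet> v = u \<bullet> (T *v v))"

definition r_injective :: "(nat \<Rightarrow> real ^ 'n) \<Rightarrow> nat \<Rightarrow> bool" where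
  "r_injective x m \<longleftrightarrow> (\<forall>T. r_self_adjoint T \<longrightarrow>
     (\<forall>k\<in>{1..m}. (T *v x k) \<bullet> x k = 0) \<longrightarrow> T = 0)"

definition r_onb :: "('n \<Rightarrow> real ^ 'n) \<Rightarrow> bool" where
  "r_onb e \<longleftrightarrow> (\<forall>i j. e i \<bullet> e j = (if i = j then 1 else 0))
     \<and> (\<forall>v. \<exists>c. v = (\<Sum>j\<in>UNIV. c j *\<^sub>R e j))"

section \<open>Complex case\<close>

definition c_inner :: "complex ^ 'n \<Rightarrow> complex ^ 'n \<Rightarrow> complex" where
  "c_inner u v = (\<Sum>i\<in>UNIV. u $ i * cnj (v $ i))"

definition c_frame :: "(nat \<Rightarrow> complex ^ 'n) \<Rightarrow> nat \<Rightarrow> bool" where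
  "c_frame x m \<longleftrightarrow> (\<exists>A B. 0 < A \<and> 0 < B \<and>
     (\<forall>v. A * (norm v)\<^sup>2 \<le> (\<Sum>k\<in>{1..m}. (cmod (c_inner v (x k)))\<^sup>2)
        \<and> (\<Sum>k\<in>{1..m}. (cmod (c_inner v (x k)))\<^sup>2) \<le> B * (norm v)\<^sup>2))"

definition c_self_adjoint :: "complex ^ 'n ^ 'n \<Rightarrow> bool" where
  "c_self_adjoint T \<longleftrightarrow> (\<forall>u v. c_inner (T *v u) v = c_inner u (T *v v))"

definition c_injective :: "(nat \<Rightarrow> complex ^ 'n) \<Rightarrow> nat \<Rightarrow> bool" where
  "c_injective x m \<longleftrightarrow> (\<forall>T. c_self_adjoint T \<longrightarrow>
     (\<forall>k\<in>{1..m}. c_inner (T *v x k) (x k) = 0) \<longrightarrow> T = 0)"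

definition c_onb :: "('n \<Rightarrow> complex ^ 'n) \<Rightarrow> bool" where
  "c_onb e \<longleftrightarrow> (\<forall>i j. c_inner (e i) (e j) = (if i = j then 1 else 0))
     \<and> (\<forall>v. \<exists>c. v = (\<Sum>j\<in>UNIV. c j *s e j))"

end

theory Submission
  imports Defs
begin

lemma quad_zero:
  fixes a b :: real
  assumes "\<forall>t. a * t + b * t^2 \<le> 0"
  shows "a = 0"
proof (rule ccontr)
  assume a0: "a \<noteq> 0"
  define c where "c = 2 * \<bar>b\<bar> + 2"
  have cpos: "c > 0" unfolding c_def by simp
  have cb: "c + b > 0" unfolding c_def using abs_ge_minus_self[of b] abs_ge_zero[of b] by linarith
  define t where "t = a / c"
  have h: "a * t + b * t^2 \<le> 0" using assms by blast
  have eq: "a * t + b * t^2 = a^2 * (c + b) / c^2"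
    unfolding t_def using cpos by (simp add: power2_eq_square field_simps)
  have "a^2 > 0" using a0 by simp
  then have "a^2 * (c + b) > 0" using cb by (rule mult_pos_pos)
  then have "a^2 * (c + b) / c^2 > 0" using cpos by simp
  then show False using h eq by linarith
qed

lemma max_vec:
  fixes L :: "'a::euclidean_space \<Rightarrow> 'a"
  assumes lin: "linear L" and sym: "\<And>u v. L u \<bullet> v = u \<bullet> L v"
    and S: "subspace S" and ne: "x \<in> S" "x \<noteq> 0"
  shows "\<exists>v\<in>S. norm v = 1 \<and> (\<forall>w\<in>S. w \<bullet> v = 0 \<longrightarrow> L v \<bullet> w = 0)"
proof -
  define K where "K = sphere 0 1 \<inter> S"
  have cK: "compact K" unfolding K_def
    by (intro compact_Int_closed compact_sphere closed_subspace S)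
  have xK: "x /\<^sub>R norm x \<in> K" unfolding K_def using ne S
    by (simp add: subspace_scale)
  have bl: "bounded_linear L" using lin linear_conv_bounded_linear by blast
  have cont: "continuous_on K (\<lambda>x. L x \<bullet> x)"
    by (intro continuous_intros linear_continuous_on bl)
  obtain v where vK: "v \<in> K" and vmax: "\<And>y. y \<in> K \<Longrightarrow> L y \<bullet> y \<le> L v \<bullet> v"
    using continuous_attains_sup[OF cK _ cont] xK by blast
  define M where "M = L v \<bullet> v"
  have vS: "v \<in> S" and nv: "norm v = 1" using vK unfolding K_def by auto
  have bound: "L u \<bullet> u \<le> M * (u \<bullet> u)" if "u \<in> S" for u
  proof (cases "u = 0")
    case True then show ?thesis using linear_0[OF lin] by simp
  next
    case False
    have "u /\<^sub>R norm u \<in> K" unfolding K_def using that False S by (simp add: subspace_scale)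
    then have "L (u /\<^sub>R norm u) \<bullet> (u /\<^sub>R norm u) \<le> M" using vmax M_def by blast
    then have "(L u \<bullet> u) / (norm u)^2 \<le> M"
      by (simp add: linear_scale[OF lin] power2_eq_square divide_inverse mult_ac)
    then have "L u \<bullet> u \<le> M * (norm u)^2" using False by (simp add: divide_le_eq)
    then show ?thesis by (simp add: power2_norm_eq_inner)
  qed
  have "L v \<bullet> w = 0" if wS: "w \<in> S" and wv: "w \<bullet> v = 0" for w
  proof -
    have "\<forall>t. (2 * (L v \<bullet> w)) * t + ((L w \<bullet> w) - M * (w \<bullet> w)) * t^2 \<le> 0"
    proof
      fix t :: real
      have uS: "v + t *\<^sub>R w \<in> S" using S vS wS by (simp add: subspace_add subspace_scale)
      have vv: "v \<bullet> v = 1" using nv by (simp add: norm_eq_1)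
      have e1: "L (v + t *\<^sub>R w) \<bullet> (v + t *\<^sub>R w) = M + 2 * t * (L v \<bullet> w) + t^2 * (L w \<bullet> w)"
        using sym[of w v] inner_commute[of w "L v"]
        by (simp add: linear_add[OF lin] linear_scale[OF lin] inner_add_left inner_add_right M_def
            power2_eq_square algebra_simps)
      have e2: "(v + t *\<^sub>R w) \<bullet> (v + t *\<^sub>R w) = 1 + t^2 * (w \<bullet> w)"
        using vv wv by (simp add: inner_add_left inner_add_right inner_commute power2_eq_square algebra_simps)
      show "(2 * (L v \<bullet> w)) * t + ((L w \<bullet> w) - M * (w \<bullet> w)) * t^2 \<le> 0"
        using bound[OF uS] unfolding e1 e2 by (simp add: algebra_simps)
    qed
    then show ?thesis using quad_zero by fastforce
  qed
  then show ?thesis using vS nv by blast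
qed

lemma mv_scale: "T *v (c *s x) = c *s (T *v x)" for T :: "'a::comm_ring_1^'n^'m"
  by (simp add: vec_eq_iff matrix_vector_mult_def sum_distrib_left mult_ac)
lemma mv_add: "T *v (x + y) = T *v x + T *v y" for T :: "complex^'n^'m"
  using linear_add[OF matrix_vector_mul_linear] .
lemma mv_diff: "T *v (x - y) = T *v x - T *v y" for T :: "complex^'n^'m"
  using linear_diff[OF matrix_vector_mul_linear] .
lemma mv_sum: "T *v (\<Sum>b\<in>B. f b) = (\<Sum>b\<in>B. T *v f b)" for T :: "complex^'n^'m"
  using linear_sum[OF matrix_vector_mul_linear] .

lemma ci_add_left: "c_inner (u + w) v = c_inner u v + c_inner w v"
  by (simp add: c_inner_def distrib_right sum.distrib)
lemma ci_add_right: "c_inner u (v + w) = c_inner u v + c_inner u w"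
  by (simp add: c_inner_def distrib_left sum.distrib)
lemma ci_diff_left: "c_inner (u - w) v = c_inner u v - c_inner w v"
  by (simp add: c_inner_def left_diff_distrib sum_subtractf)
lemma ci_diff_right: "c_inner u (v - w) = c_inner u v - c_inner u w"
  by (simp add: c_inner_def right_diff_distrib sum_subtractf)
lemma ci_scale_left: "c_inner (c *s u) v = c * c_inner u v"
  by (simp add: c_inner_def sum_distrib_left mult_ac)
lemma ci_scale_right: "c_inner u (c *s v) = cnj c * c_inner u v"
  by (simp add: c_inner_def sum_distrib_left mult_ac)
lemma ci_sum_left: "c_inner (\<Sum>b\<in>B. f b) v = (\<Sum>b\<in>B. c_inner (f b) v)"
  by (simp add: c_inner_def sum_distrib_right sum_component sum.swap[of _ B])
lemma ci_sum_right: "c_inner v (\<Sum>b\<in>B. f b) = (\<Sum>b\<in>B. c_inner v (f b))"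
  by (simp add: c_inner_def sum_distrib_left sum_component sum.swap[of _ B])
lemma ci_cnj: "c_inner v u = cnj (c_inner u v)"
  by (simp add: c_inner_def mult.commute)
lemma ci_Re: "Re (c_inner u v) = u \<bullet> v"
  by (simp add: c_inner_def inner_vec_def inner_complex_def Re_sum)
lemma ci_self: "c_inner u u = complex_of_real ((norm u)^2)"
proof -
  have "Im (c_inner u u) = 0" by (simp add: c_inner_def Im_sum)
  moreover have "Re (c_inner u u) = (norm u)^2" by (simp add: ci_Re power2_norm_eq_inner)
  ultimately show ?thesis by (simp add: complex_eq_iff)
qed
lemma ci_zero_iff: "c_inner u u = 0 \<longleftrightarrow> u = 0"
  by (simp add: ci_self)
lemma ci_0_left[simp]: "c_inner 0 v = 0" and ci_0_right[simp]: "c_inner v 0 = 0"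
  by (simp_all add: c_inner_def)
lemma scaleR_cvec: "r *\<^sub>R (x :: complex^'n) = complex_of_real r *s x"
  unfolding vec_eq_iff vector_scaleR_component vector_smult_component by (simp add: scaleR_conv_of_real)

lemma real_eigen_basis:
  fixes L :: "'a::euclidean_space \<Rightarrow> 'a"
  assumes lin: "linear L" and sym: "\<And>u v. L u \<bullet> v = u \<bullet> L v"
  shows "subspace S \<Longrightarrow> L ` S \<subseteq> S \<Longrightarrow> \<exists>B. finite B \<and> B \<subseteq> S \<and>
     (\<forall>b\<in>B. norm b = 1 \<and> (\<exists>l. L b = l *\<^sub>R b)) \<and> (\<forall>a\<in>B. \<forall>b\<in>B. a \<noteq> b \<longrightarrow> a \<bullet> b = 0) \<and>
     (\<forall>v\<in>S. v = (\<Sum>b\<in>B. (v \<bullet> b) *\<^sub>R b))"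
proof (induction "dim S" arbitrary: S rule: less_induct)
  case less
  show ?case
  proof (cases "\<exists>x\<in>S. x \<noteq> 0")
    case False
    then show ?thesis by (intro exI[of _ "{}"]) auto
  next
    case True
    then obtain x where x: "x \<in> S" "x \<noteq> 0" by blast
    obtain v where vS: "v \<in> S" and nv: "norm v = 1" and vmax: "\<And>w. w \<in> S \<Longrightarrow> w \<bullet> v = 0 \<Longrightarrow> L v \<bullet> w = 0"
      using max_vec[OF lin sym less.prems(1) x] by blast
    have vv: "v \<bullet> v = 1" using nv by (simp add: norm_eq_1)
    define w where "w = L v - (L v \<bullet> v) *\<^sub>R v"
    have LvS: "L v \<in> S" using less.prems(2) vS by blast
    have wS: "w \<in> S" unfolding w_def using less.prems(1) LvS vS by (simp add: subspace_diff subspace_scale)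
    have wv: "w \<bullet> v = 0" unfolding w_def using vv by (simp add: inner_diff_left)
    have "L v \<bullet> w = 0" using vmax[OF wS wv] .
    then have "w \<bullet> w = 0" using wv unfolding w_def by (simp add: inner_diff_left inner_commute)
    then have "w = 0" by simp
    then have eig: "L v = (L v \<bullet> v) *\<^sub>R v" unfolding w_def by simp
    define S' where "S' = S \<inter> {w. w \<bullet> v = 0}"
    have sub': "subspace S'" unfolding S'_def using less.prems(1)
      by (auto simp: subspace_def inner_add_left)
    have inv': "L ` S' \<subseteq> S'"
    proof
      fix y assume "y \<in> L ` S'"
      then obtain u where u: "u \<in> S'" "y = L u" by blast
      have "L u \<bullet> v = u \<bullet> L v" by (rule sym)
      also have "\<dots> = 0" using u(1) unfolding S'_def by (subst eig) (simp add: inner_commute)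
      finally show "y \<in> S'" using u less.prems(2) unfolding S'_def by auto
    qed
    have "span S' \<subset> span S"
    proof -
      have "S' \<subseteq> S" unfolding S'_def by auto
      moreover have "v \<notin> S'" using vv unfolding S'_def by auto
      moreover have e1: "span S' = S'" and e2: "span S = S" using sub' less.prems(1) by simp_all
      ultimately show ?thesis unfolding e1 e2 using vS by blast
    qed
    then have "dim S' < dim S" by (rule dim_psubset)
    from less.hyps[OF this sub' inv'] obtain B where B: "finite B" "B \<subseteq> S'"
      "\<forall>b\<in>B. norm b = 1 \<and> (\<exists>l. L b = l *\<^sub>R b)" "\<forall>a\<in>B. \<forall>b\<in>B. a \<noteq> b \<longrightarrow> a \<bullet> b = 0"
      "\<forall>u\<in>S'. u = (\<Sum>b\<in>B. (u \<bullet> b) *\<^sub>R b)" by blast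
    have Bv: "b \<bullet> v = 0" if "b \<in> B" for b using B(2) that unfolding S'_def by auto
    have vB: "v \<notin> B" using Bv vv by force
    show ?thesis
    proof (intro exI[of _ "insert v B"] conjI)
      show "finite (insert v B)" using B(1) by simp
      show "insert v B \<subseteq> S" using B(2) vS unfolding S'_def by auto
      show "\<forall>b\<in>insert v B. norm b = 1 \<and> (\<exists>l. L b = l *\<^sub>R b)" using B(3) nv eig by blast
      show "\<forall>a\<in>insert v B. \<forall>b\<in>insert v B. a \<noteq> b \<longrightarrow> a \<bullet> b = 0"
        using B(4) Bv by (auto simp: inner_commute)
      show "\<forall>u\<in>S. u = (\<Sum>b\<in>insert v B. (u \<bullet> b) *\<^sub>R b)"
      proof
        fix u assume uS: "u \<in> S"
        define u' where "u' = u - (u \<bullet> v) *\<^sub>R v"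
        have "u' \<in> S'" unfolding S'_def u'_def using uS vS less.prems(1) vv
          by (simp add: subspace_diff subspace_scale inner_diff_left)
        then have "u' = (\<Sum>b\<in>B. (u' \<bullet> b) *\<^sub>R b)" using B(5) by blast
        also have "\<dots> = (\<Sum>b\<in>B. (u \<bullet> b) *\<^sub>R b)"
          by (rule sum.cong) (auto simp: u'_def inner_diff_left Bv inner_commute[of v])
        finally have "u = (u \<bullet> v) *\<^sub>R v + (\<Sum>b\<in>B. (u \<bullet> b) *\<^sub>R b)" unfolding u'_def by (simp add: algebra_simps)
        then show "u = (\<Sum>b\<in>insert v B. (u \<bullet> b) *\<^sub>R b)" using B(1) vB by simp
      qed
    qed
  qed
qed

lemma complex_eigen_basis:
  fixes T :: "complex^'n^'n"
  assumes sa: "c_self_adjoint T"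
  shows "subspace S \<Longrightarrow> (\<forall>x\<in>S. \<forall>c. c *s x \<in> S) \<Longrightarrow> (*v) T ` S \<subseteq> S \<Longrightarrow> \<exists>B. finite B \<and> B \<subseteq> S \<and>
     (\<forall>b\<in>B. c_inner b b = 1 \<and> (\<exists>l. T *v b = l *s b)) \<and> (\<forall>a\<in>B. \<forall>b\<in>B. a \<noteq> b \<longrightarrow> c_inner a b = 0) \<and>
     (\<forall>v\<in>S. v = (\<Sum>b\<in>B. c_inner v b *s b))"
proof (induction "dim S" arbitrary: S rule: less_induct)
  case less
  have lin: "linear ((*v) T)" by simp
  have sym: "\<And>u v. (T *v u) \<bullet> v = u \<bullet> (T *v v)"
    using sa unfolding c_self_adjoint_def by (metis ci_Re)
  show ?case
  proof (cases "\<exists>x\<in>S. x \<noteq> 0")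
    case False
    then show ?thesis by (intro exI[of _ "{}"]) auto
  next
    case True
    then obtain x where x: "x \<in> S" "x \<noteq> 0" by blast
    obtain v where vS: "v \<in> S" and nv: "norm v = 1" and vmax: "\<And>w. w \<in> S \<Longrightarrow> w \<bullet> v = 0 \<Longrightarrow> (T *v v) \<bullet> w = 0"
      using max_vec[OF lin sym less.prems(1) x] by blast
    have vv: "c_inner v v = 1" using nv by (simp add: ci_self)
    have orth: "c_inner (T *v v) w = 0" if wS: "w \<in> S" and wv: "c_inner w v = 0" for w
    proof -
      have "Re (c_inner (T *v v) w) = 0" using vmax[OF wS] wv by (metis ci_Re zero_complex.sel(1))
      moreover have "\<i> *s w \<in> S" using less.prems(2) wS by blast
      moreover have "c_inner (\<i> *s w) v = 0" using wv by (simp add: ci_scale_left)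
      ultimately have "Re (c_inner (T *v v) (\<i> *s w)) = 0" "Re (c_inner (T *v v) w) = 0"
        using vmax by (metis ci_Re zero_complex.sel(1))+
      then show ?thesis by (simp add: ci_scale_right complex_eq_iff)
    qed
    define w where "w = T *v v - c_inner (T *v v) v *s v"
    have LvS: "T *v v \<in> S" using less.prems(3) vS by blast
    have wS: "w \<in> S" unfolding w_def using less.prems LvS vS by (simp add: subspace_diff)
    have wv: "c_inner w v = 0" unfolding w_def using vv by (simp add: ci_diff_left ci_scale_left)
    have "c_inner (T *v v) w = 0" using orth[OF wS wv] .
    moreover have "c_inner v w = 0" using wv by (metis ci_cnj complex_cnj_zero)
    ultimately have "c_inner w w = 0" unfolding w_def
      by (simp add: ci_diff_left ci_scale_left)
    then have "w = 0" by (simp add: ci_zero_iff)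
    then have eig: "T *v v = c_inner (T *v v) v *s v" unfolding w_def by simp
    define S' where "S' = S \<inter> {w. c_inner w v = 0}"
    have sub': "subspace S'" unfolding S'_def using less.prems(1)
      by (auto simp: subspace_def ci_add_left scaleR_cvec ci_scale_left)
    have cl': "\<forall>x\<in>S'. \<forall>c. c *s x \<in> S'" unfolding S'_def using less.prems(2)
      by (auto simp: ci_scale_left)
    have inv': "(*v) T ` S' \<subseteq> S'"
    proof
      fix y assume "y \<in> (*v) T ` S'"
      then obtain u where u: "u \<in> S'" "y = T *v u" by blast
      have "c_inner (T *v u) v = c_inner u (T *v v)" using sa unfolding c_self_adjoint_def by blast
      also have "\<dots> = 0" using u(1) unfolding S'_def by (subst eig) (simp add: ci_scale_right)
      finally show "y \<in> S'" using u less.prems(3) unfolding S'_def by auto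
    qed
    have "span S' \<subset> span S"
    proof -
      have "S' \<subseteq> S" unfolding S'_def by auto
      moreover have "v \<notin> S'" using vv unfolding S'_def by auto
      moreover have e1: "span S' = S'" and e2: "span S = S" using sub' less.prems(1) by simp_all
      ultimately show ?thesis unfolding e1 e2 using vS by blast
    qed
    then have "dim S' < dim S" by (rule dim_psubset)
    from less.hyps[OF this sub' cl' inv'] obtain B where B: "finite B" "B \<subseteq> S'"
      "\<forall>b\<in>B. c_inner b b = 1 \<and> (\<exists>l. T *v b = l *s b)" "\<forall>a\<in>B. \<forall>b\<in>B. a \<noteq> b \<longrightarrow> c_inner a b = 0"
      "\<forall>u\<in>S'. u = (\<Sum>b\<in>B. c_inner u b *s b)" by blast
    have Bv: "c_inner b v = 0" if "b \<in> B" for b using B(2) that unfolding S'_def by auto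
    have vB': "c_inner v b = 0" if "b \<in> B" for b using Bv[OF that] by (metis ci_cnj complex_cnj_zero)
    have vB: "v \<notin> B" using Bv vv by force
    show ?thesis
    proof (intro exI[of _ "insert v B"] conjI)
      show "finite (insert v B)" using B(1) by simp
      show "insert v B \<subseteq> S" using B(2) vS unfolding S'_def by auto
      show "\<forall>b\<in>insert v B. c_inner b b = 1 \<and> (\<exists>l. T *v b = l *s b)" using B(3) vv eig by blast
      show "\<forall>a\<in>insert v B. \<forall>b\<in>insert v B. a \<noteq> b \<longrightarrow> c_inner a b = 0"
        using B(4) Bv vB' by auto
      show "\<forall>u\<in>S. u = (\<Sum>b\<in>insert v B. c_inner u b *s b)"
      proof
        fix u assume uS: "u \<in> S"
        define u' where "u' = u - c_inner u v *s v"
        have "u' \<in> S'" unfolding S'_def u'_def using uS vS less.prems(1,2) vv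
          by (simp add: subspace_diff ci_diff_left ci_scale_left)
        then have "u' = (\<Sum>b\<in>B. c_inner u' b *s b)" using B(5) by blast
        also have "\<dots> = (\<Sum>b\<in>B. c_inner u b *s b)"
          by (rule sum.cong) (auto simp: u'_def ci_diff_left ci_scale_left vB')
        finally have "u = c_inner u v *s v + (\<Sum>b\<in>B. c_inner u b *s b)" unfolding u'_def by (simp add: algebra_simps)
        then show "u = (\<Sum>b\<in>insert v B. c_inner u b *s b)" using B(1) vB by simp
      qed
    qed
  qed
qed

lemma perp_span_zero:
  fixes d :: "'a::real_inner"
  assumes "\<forall>y\<in>D. d \<bullet> y = 0" "span D = UNIV"
  shows "d = 0"
proof -
  have "span D \<subseteq> {y. d \<bullet> y = 0}"
    by (rule span_minimal) (use assms(1) in \<open>auto simp: subspace_def inner_add_right\<close>)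
  then have "d \<in> {y. d \<bullet> y = 0}" using assms(2) by blast
  then show ?thesis by simp
qed

lemma nonspan_perp:
  fixes D :: "(real^'n) set"
  assumes "span D \<noteq> UNIV"
  obtains d where "d \<noteq> 0" "\<forall>y\<in>D. d \<bullet> y = 0"
proof -
  have "dim D \<noteq> DIM(real^'n)" using assms dim_eq_full by blast
  then have "dim D < DIM(real^'n)" using dim_subset_UNIV[of D] by simp
  then obtain d where "d \<noteq> 0" "\<And>y. y \<in> span D \<Longrightarrow> orthogonal d y"
    using orthogonal_to_subspace_exists by blast
  then show ?thesis using that span_base orthogonal_def by blast
qed

lemma r_onb_expand:
  assumes "r_onb e"
  shows "v = (\<Sum>j\<in>UNIV. (v \<bullet> e j) *\<^sub>R e j)"
proof -
  obtain c where c: "v = (\<Sum>j\<in>UNIV. c j *\<^sub>R e j)" using assms unfolding r_onb_def by blast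
  have "v \<bullet> e i = c i" for i
  proof -
    have o: "e j \<bullet> e i = (if j = i then 1 else 0)" for j using assms unfolding r_onb_def by blast
    have "v \<bullet> e i = (\<Sum>j\<in>UNIV. c j * (e j \<bullet> e i))" by (subst c) (simp add: inner_sum_left)
    also have "\<dots> = (\<Sum>j\<in>UNIV. if j = i then c j else 0)" by (rule sum.cong) (auto simp: o)
    finally show ?thesis by simp
  qed
  then show ?thesis using c by simp
qed

lemma c_onb_expand:
  assumes "c_onb e"
  shows "v = (\<Sum>j\<in>UNIV. c_inner v (e j) *s e j)"
proof -
  obtain c where c: "v = (\<Sum>j\<in>UNIV. c j *s e j)" using assms unfolding c_onb_def by blast
  have "c_inner v (e i) = c i" for i
  proof -
    have o: "c_inner (e j) (e i) = (if j = i then 1 else 0)" for j using assms unfolding c_onb_def by blast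
    have "c_inner v (e i) = (\<Sum>j\<in>UNIV. c j * c_inner (e j) (e i))" by (subst c) (simp add: ci_sum_left ci_scale_left)
    also have "\<dots> = (\<Sum>j\<in>UNIV. if j = i then c j else 0)" by (rule sum.cong) (auto simp: o)
    finally show ?thesis by simp
  qed
  then show ?thesis using c by simp
qed

lemma real_dir1:
  fixes x :: "nat \<Rightarrow> real^'n"
  assumes inj: "r_injective x m" and e: "r_onb e"
  shows "span ((\<lambda>k. \<chi> j. (x k \<bullet> e j)\<^sup>2) ` {1..m}) = UNIV"
proof (rule ccontr)
  assume "span ((\<lambda>k. \<chi> j. (x k \<bullet> e j)\<^sup>2) ` {1..m}) \<noteq> UNIV"
  then obtain d where d: "d \<noteq> 0" "\<forall>y\<in>(\<lambda>k. \<chi> j. (x k \<bullet> e j)\<^sup>2) ` {1..m}. d \<bullet> y = 0"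
    by (rule nonspan_perp)
  define T :: "real^'n^'n" where "T = (\<chi> i l. \<Sum>j\<in>UNIV. d$j * (e j $ i * e j $ l))"
  have Tv: "T *v u = (\<Sum>j\<in>UNIV. (d$j * (e j \<bullet> u)) *\<^sub>R e j)" for u
  proof -
    have "(T *v u) $ i = (\<Sum>j\<in>UNIV. d$j * (e j \<bullet> u) * e j $ i)" for i
    proof -
      have "(T *v u) $ i = (\<Sum>l\<in>UNIV. \<Sum>j\<in>UNIV. d$j * (e j $ i * e j $ l) * u $ l)"
        unfolding T_def by (simp add: matrix_vector_mult_def sum_distrib_right)
      also have "\<dots> = (\<Sum>j\<in>UNIV. \<Sum>l\<in>UNIV. d$j * (e j $ i * e j $ l) * u $ l)"
        by (rule sum.swap)
      also have "\<dots> = (\<Sum>j\<in>UNIV. d$j * (e j \<bullet> u) * e j $ i)"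
        by (simp add: inner_vec_def sum_distrib_left sum_distrib_right mult_ac)
      finally show ?thesis .
    qed
    then show ?thesis by (simp add: vec_eq_iff sum_component)
  qed
  have sa: "r_self_adjoint T" unfolding r_self_adjoint_def Tv
    by (simp add: inner_sum_left inner_sum_right mult_ac inner_commute)
  have quad: "(T *v x k) \<bullet> x k = 0" if k: "k \<in> {1..m}" for k
  proof -
    have "(T *v x k) \<bullet> x k = (\<Sum>j\<in>UNIV. d$j * (x k \<bullet> e j)\<^sup>2)"
      unfolding Tv by (simp add: inner_sum_left inner_sum_right power2_eq_square inner_commute mult_ac)
    also have "\<dots> = d \<bullet> (\<chi> j. (x k \<bullet> e j)\<^sup>2)" by (simp add: inner_vec_def)
    also have "\<dots> = 0" using d(2) k by blast
    finally show ?thesis .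
  qed
  have "T = 0" using inj sa quad unfolding r_injective_def by blast
  have "d $ i = 0" for i
  proof -
    have o: "e j \<bullet> e i = (if j = i then 1 else 0)" for j using e unfolding r_onb_def by blast
    have "T *v e i = (\<Sum>j\<in>UNIV. if j = i then d$i *\<^sub>R e i else 0)"
      unfolding Tv by (rule sum.cong) (auto simp: o)
    then have "T *v e i = d$i *\<^sub>R e i" by simp
    then have "d$i *\<^sub>R e i = 0" using \<open>T = 0\<close> by simp
    moreover have "e i \<noteq> 0" using e unfolding r_onb_def by (metis inner_zero_left zero_neq_one)
    ultimately show ?thesis by simp
  qed
  then have "d = 0" by (simp add: vec_eq_iff)
  then show False using d(1) by simp
qed

lemma real_dir2:
  fixes x :: "nat \<Rightarrow> real^'n"
  assumes sp: "\<forall>e. r_onb e \<longrightarrow> span ((\<lambda>k. \<chi> j. (x k \<bullet> e j)\<^sup>2) ` {1..m}) = UNIV"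
  shows "r_injective x m"
  unfolding r_injective_def
proof (intro allI impI)
  fix T :: "real^'n^'n" assume sa: "r_self_adjoint T" and q: "\<forall>k\<in>{1..m}. (T *v x k) \<bullet> x k = 0"
  have lin: "linear ((*v) T)" by simp
  have sym: "\<And>u v. (T *v u) \<bullet> v = u \<bullet> (T *v v)" using sa unfolding r_self_adjoint_def by blast
  obtain B where B: "finite B" "\<forall>b\<in>B. norm b = 1 \<and> (\<exists>l. T *v b = l *\<^sub>R b)"
    "\<forall>a\<in>B. \<forall>b\<in>B. a \<noteq> b \<longrightarrow> a \<bullet> b = 0" "\<forall>v. v = (\<Sum>b\<in>B. (v \<bullet> b) *\<^sub>R b)"
    using real_eigen_basis[OF lin sym, of UNIV] by auto
  have B0: "0 \<notin> B" using B(2) by auto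
  have ind: "independent B"
    by (rule pairwise_orthogonal_independent) (use B(3) B0 in \<open>auto simp: pairwise_def orthogonal_def\<close>)
  have spB: "span B = UNIV"
  proof -
    have "v \<in> span B" for v
      by (subst B(4)[rule_format]) (intro span_sum span_scale span_base)
    then show ?thesis by auto
  qed
  have "card B = CARD('n)" using dim_span_eq_card_independent[OF ind] spB by simp
  then obtain h where h: "bij_betw h (UNIV::'n set) B"
    using finite_same_card_bij[of "UNIV::'n set" B] B(1) by auto
  have hB: "h j \<in> B" for j using h bij_betwE by blast
  have hinj: "h i = h j \<Longrightarrow> i = j" for i j using h unfolding bij_betw_def inj_on_def by blast
  have onb: "r_onb h"
    unfolding r_onb_def
  proof (intro conjI allI)
    fix i j show "h i \<bullet> h j = (if i = j then 1 else 0)"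
    proof (cases "i = j")
      case True then show ?thesis using B(2) hB by (simp add: norm_eq_1)
    next
      case False then have "h i \<noteq> h j" using hinj by blast
      then show ?thesis using B(3) hB False by simp
    qed
  next
    fix v
    have "v = (\<Sum>b\<in>B. (v \<bullet> b) *\<^sub>R b)" using B(4) by blast
    also have "\<dots> = (\<Sum>j\<in>UNIV. (v \<bullet> h j) *\<^sub>R h j)"
      using sum.reindex_bij_betw[OF h, of "\<lambda>b. (v \<bullet> b) *\<^sub>R b"] by simp
    finally show "\<exists>c. v = (\<Sum>j\<in>UNIV. c j *\<^sub>R h j)" by (rule exI[of _ "\<lambda>j. v \<bullet> h j"])
  qed
  have "\<forall>j. \<exists>l. T *v h j = l *\<^sub>R h j" using B(2) hB by blast
  then obtain lam where lam: "\<And>j. T *v h j = lam j *\<^sub>R h j" by metis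
  have Tv: "T *v v = (\<Sum>j\<in>UNIV. (v \<bullet> h j) *\<^sub>R (lam j *\<^sub>R h j))" for v
  proof -
    have "T *v v = T *v (\<Sum>j\<in>UNIV. (v \<bullet> h j) *\<^sub>R h j)"
      using arg_cong[OF r_onb_expand[OF onb, of v], of "(*v) T"] .
    also have "\<dots> = (\<Sum>j\<in>UNIV. (v \<bullet> h j) *\<^sub>R (lam j *\<^sub>R h j))"
      by (simp add: linear_sum[OF lin] linear_scale[OF lin] lam)
    finally show ?thesis .
  qed
  define lv :: "real^'n" where "lv = (\<chi> j. lam j)"
  have "lv = 0"
  proof (rule perp_span_zero[OF _ sp[rule_format, OF onb]])
    show "\<forall>y\<in>(\<lambda>k. \<chi> j. (x k \<bullet> h j)\<^sup>2) ` {1..m}. lv \<bullet> y = 0"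
    proof
      fix y assume "y \<in> (\<lambda>k. \<chi> j. (x k \<bullet> h j)\<^sup>2) ` {1..m}"
      then obtain k where k: "k \<in> {1..m}" "y = (\<chi> j. (x k \<bullet> h j)\<^sup>2)" by blast
      have "lv \<bullet> y = (\<Sum>j\<in>UNIV. lam j * (x k \<bullet> h j)\<^sup>2)"
        unfolding k(2) lv_def by (simp add: inner_vec_def)
      also have "\<dots> = (\<Sum>j\<in>UNIV. ((x k \<bullet> h j) * lam j) * (h j \<bullet> x k))"
        by (rule sum.cong) (simp_all add: power2_eq_square inner_commute)
      also have "\<dots> = (T *v x k) \<bullet> x k"
        unfolding Tv by (simp add: inner_sum_left)
      finally have "lv \<bullet> y = (T *v x k) \<bullet> x k" .
      then show "lv \<bullet> y = 0" using q k(1) by simp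
    qed
  qed
  then have "lam j = 0" for j unfolding lv_def by (simp add: vec_eq_iff)
  then have "T *v v = 0 *v v" for v unfolding Tv by simp
  then show "T = 0" using matrix_eq by blast
qed

lemma complex_dir1:
  fixes x :: "nat \<Rightarrow> complex^'n"
  assumes inj: "c_injective x m" and e: "c_onb e"
  shows "span ((\<lambda>k. \<chi> j. (cmod (c_inner (x k) (e j)))\<^sup>2) ` {1..m}) = UNIV"
proof (rule ccontr)
  assume "span ((\<lambda>k. \<chi> j. (cmod (c_inner (x k) (e j)))\<^sup>2) ` {1..m}) \<noteq> UNIV"
  then obtain d where d: "d \<noteq> 0" "\<forall>y\<in>(\<lambda>k. \<chi> j. (cmod (c_inner (x k) (e j)))\<^sup>2) ` {1..m}. d \<bullet> y = 0"
    by (rule nonspan_perp)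
  define T :: "complex^'n^'n" where "T = (\<chi> i l. \<Sum>j\<in>UNIV. complex_of_real (d$j) * (e j $ i * cnj (e j $ l)))"
  have Tv: "T *v u = (\<Sum>j\<in>UNIV. (complex_of_real (d$j) * c_inner u (e j)) *s e j)" for u
  proof -
    have "(T *v u) $ i = (\<Sum>j\<in>UNIV. complex_of_real (d$j) * c_inner u (e j) * e j $ i)" for i
    proof -
      have "(T *v u) $ i = (\<Sum>l\<in>UNIV. \<Sum>j\<in>UNIV. complex_of_real (d$j) * (e j $ i * cnj (e j $ l)) * u $ l)"
        unfolding T_def by (simp add: matrix_vector_mult_def sum_distrib_right)
      also have "\<dots> = (\<Sum>j\<in>UNIV. \<Sum>l\<in>UNIV. complex_of_real (d$j) * (e j $ i * cnj (e j $ l)) * u $ l)"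
        by (rule sum.swap)
      also have "\<dots> = (\<Sum>j\<in>UNIV. complex_of_real (d$j) * c_inner u (e j) * e j $ i)"
        by (simp add: c_inner_def sum_distrib_left sum_distrib_right mult_ac)
      finally show ?thesis .
    qed
    then show ?thesis by (simp add: vec_eq_iff sum_component)
  qed
  have sa: "c_self_adjoint T" unfolding c_self_adjoint_def
  proof (intro allI)
    fix u v :: "complex^'n"
    show "c_inner (T *v u) v = c_inner u (T *v v)"
      unfolding Tv ci_sum_left ci_sum_right ci_scale_left ci_scale_right
    proof (rule sum.cong)
      fix j
      have "c_inner (e j) v = cnj (c_inner v (e j))" by (rule ci_cnj)
      then show "complex_of_real (d $ j) * c_inner u (e j) * c_inner (e j) v =
         cnj (complex_of_real (d $ j) * c_inner v (e j)) * c_inner u (e j)"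
        by (simp only: complex_cnj_mult complex_cnj_complex_of_real mult_ac)
    qed simp
  qed
  have quad: "c_inner (T *v x k) (x k) = 0" if k: "k \<in> {1..m}" for k
  proof -
    have "c_inner (T *v x k) (x k) = (\<Sum>j\<in>UNIV. complex_of_real (d$j) * (c_inner (x k) (e j) * cnj (c_inner (x k) (e j))))"
    proof -
      have cc: "\<And>j. c_inner (e j) (x k) = cnj (c_inner (x k) (e j))" by (rule ci_cnj)
      show ?thesis unfolding Tv by (simp add: ci_sum_left ci_scale_left cc mult_ac)
    qed
    also have "\<dots> = complex_of_real (\<Sum>j\<in>UNIV. d$j * (cmod (c_inner (x k) (e j)))\<^sup>2)"
      by (simp add: complex_norm_square[symmetric])
    also have "(\<Sum>j\<in>UNIV. d$j * (cmod (c_inner (x k) (e j)))\<^sup>2) = d \<bullet> (\<chi> j. (cmod (c_inner (x k) (e j)))\<^sup>2)"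
      by (simp add: inner_vec_def)
    also have "\<dots> = 0" using d(2) k by blast
    finally show ?thesis by simp
  qed
  have "T = 0" using inj sa quad unfolding c_injective_def by blast
  have "d $ i = 0" for i
  proof -
    have o: "c_inner (e i) (e j) = (if i = j then 1 else 0)" for j using e unfolding c_onb_def by blast
    have "T *v e i = (\<Sum>j\<in>UNIV. if j = i then complex_of_real (d$i) *s e i else 0)"
      unfolding Tv by (rule sum.cong) (auto simp: o)
    then have "T *v e i = complex_of_real (d$i) *s e i" by simp
    then have "complex_of_real (d$i) *s e i = 0" using \<open>T = 0\<close> by simp
    moreover have "e i \<noteq> 0" using o[of i] by auto
    ultimately show ?thesis by (simp add: vec.scale_eq_0_iff)
  qed
  then have "d = 0" by (simp add: vec_eq_iff)
  then show False using d(1) by simp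
qed

lemma complex_dir2:
  fixes x :: "nat \<Rightarrow> complex^'n"
  assumes sp: "\<forall>e. c_onb e \<longrightarrow> span ((\<lambda>k. \<chi> j. (cmod (c_inner (x k) (e j)))\<^sup>2) ` {1..m}) = UNIV"
  shows "c_injective x m"
  unfolding c_injective_def
proof (intro allI impI)
  fix T :: "complex^'n^'n" assume sa: "c_self_adjoint T" and q: "\<forall>k\<in>{1..m}. c_inner (T *v x k) (x k) = 0"
  obtain B where B: "finite B" "\<forall>b\<in>B. c_inner b b = 1 \<and> (\<exists>l. T *v b = l *s b)"
    "\<forall>a\<in>B. \<forall>b\<in>B. a \<noteq> b \<longrightarrow> c_inner a b = 0" "\<forall>v. v = (\<Sum>b\<in>B. c_inner v b *s b)"
    using complex_eigen_basis[OF sa, of UNIV] by auto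
  have ind: "vec.independent B"
  proof
    assume "vec.dependent B"
    then obtain u where u: "\<exists>v\<in>B. u v \<noteq> 0" "(\<Sum>v\<in>B. u v *s v) = 0"
      using vec.dependent_finite[OF B(1)] by blast
    have "u a = 0" if a: "a \<in> B" for a
    proof -
      have "0 = c_inner (\<Sum>v\<in>B. u v *s v) a" using u(2) by simp
      also have "\<dots> = (\<Sum>v\<in>B. u v * c_inner v a)" by (simp add: ci_sum_left ci_scale_left)
      also have "\<dots> = (\<Sum>v\<in>B. if v = a then u a else 0)"
        by (rule sum.cong) (use B(2,3) a in auto)
      also have "\<dots> = u a" using B(1) a by simp
      finally show ?thesis by simp
    qed
    then show False using u(1) by blast
  qed
  have spB: "vec.span B = UNIV"
  proof -
    have "v \<in> vec.span B" for v
      by (subst B(4)[rule_format]) (intro vec.span_sum vec.span_scale vec.span_base)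
    then show ?thesis by auto
  qed
  have "card B = vec.dim (vec.span B)" using vec.dim_span_eq_card_independent[OF ind] by (rule sym)
  also have "\<dots> = CARD('n)" unfolding spB by (rule vec_dim_card)
  finally have "card B = CARD('n)" .
  then obtain h where h: "bij_betw h (UNIV::'n set) B"
    using finite_same_card_bij[of "UNIV::'n set" B] B(1) by auto
  have hB: "h j \<in> B" for j using h bij_betwE by blast
  have hinj: "h i = h j \<Longrightarrow> i = j" for i j using h unfolding bij_betw_def inj_on_def by blast
  have onb: "c_onb h"
    unfolding c_onb_def
  proof (intro conjI allI)
    fix i j show "c_inner (h i) (h j) = (if i = j then 1 else 0)"
    proof (cases "i = j")
      case True then show ?thesis using B(2) hB by simp
    next
      case False then have "h i \<noteq> h j" using hinj by blast
      then show ?thesis using B(3) hB False by simp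
    qed
  next
    fix v
    have "v = (\<Sum>b\<in>B. c_inner v b *s b)" using B(4) by blast
    also have "\<dots> = (\<Sum>j\<in>UNIV. c_inner v (h j) *s h j)"
      using sum.reindex_bij_betw[OF h, of "\<lambda>b. c_inner v b *s b"] by simp
    finally show "\<exists>c. v = (\<Sum>j\<in>UNIV. c j *s h j)" by (rule exI[of _ "\<lambda>j. c_inner v (h j)"])
  qed
  have "\<forall>j. \<exists>l. T *v h j = l *s h j" using B(2) hB by blast
  then obtain lam where lam: "\<And>j. T *v h j = lam j *s h j" by metis
  have hh: "c_inner (h j) (h j) = 1" for j using B(2) hB by blast
  have lamreal: "lam j = complex_of_real (Re (lam j))" for j
  proof -
    have "lam j = c_inner (T *v h j) (h j)" by (simp add: lam ci_scale_left hh)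
    also have "\<dots> = c_inner (h j) (T *v h j)" using sa unfolding c_self_adjoint_def by blast
    also have "\<dots> = cnj (lam j)" by (simp add: lam ci_scale_right hh)
    finally have "lam j = cnj (lam j)" .
    then have "Im (lam j) = 0" by (metis complex_cnj_cancel_iff Reals_cnj_iff complex_is_Real_iff)
    then show ?thesis by (simp add: complex_eq_iff)
  qed
  have Tv: "T *v v = (\<Sum>j\<in>UNIV. (c_inner v (h j) * lam j) *s h j)" for v
  proof -
    have "T *v v = T *v (\<Sum>j\<in>UNIV. c_inner v (h j) *s h j)"
      using arg_cong[OF c_onb_expand[OF onb, of v], of "(*v) T"] .
    also have "\<dots> = (\<Sum>j\<in>UNIV. (c_inner v (h j) * lam j) *s h j)"
      by (simp add: mv_sum mv_scale lam)
    finally show ?thesis .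
  qed
  define lv :: "real^'n" where "lv = (\<chi> j. Re (lam j))"
  have "lv = 0"
  proof (rule perp_span_zero[OF _ sp[rule_format, OF onb]])
    show "\<forall>y\<in>(\<lambda>k. \<chi> j. (cmod (c_inner (x k) (h j)))\<^sup>2) ` {1..m}. lv \<bullet> y = 0"
    proof
      fix y assume "y \<in> (\<lambda>k. \<chi> j. (cmod (c_inner (x k) (h j)))\<^sup>2) ` {1..m}"
      then obtain k where k: "k \<in> {1..m}" "y = (\<chi> j. (cmod (c_inner (x k) (h j)))\<^sup>2)" by blast
      have "complex_of_real (lv \<bullet> y) = complex_of_real (\<Sum>j\<in>UNIV. Re (lam j) * (cmod (c_inner (x k) (h j)))\<^sup>2)"
        unfolding k(2) lv_def by (simp add: inner_vec_def)
      also have "\<dots> = (\<Sum>j\<in>UNIV. (c_inner (x k) (h j) * lam j) * c_inner (h j) (x k))"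
        unfolding of_real_sum
      proof (rule sum.cong)
        fix j
        have "complex_of_real (Re (lam j) * (cmod (c_inner (x k) (h j)))\<^sup>2)
           = lam j * (c_inner (x k) (h j) * cnj (c_inner (x k) (h j)))"
        proof -
          have "lam j * (c_inner (x k) (h j) * cnj (c_inner (x k) (h j)))
              = complex_of_real (Re (lam j)) * complex_of_real ((cmod (c_inner (x k) (h j)))\<^sup>2)"
            by (metis lamreal complex_norm_square)
          then show ?thesis by simp
        qed
        then show "complex_of_real (Re (lam j) * (cmod (c_inner (x k) (h j)))\<^sup>2)
           = (c_inner (x k) (h j) * lam j) * c_inner (h j) (x k)"
          using ci_cnj[of "h j" "x k"] by (simp add: mult_ac)
      qed simp
      also have "\<dots> = c_inner (T *v x k) (x k)"
        unfolding Tv by (simp add: ci_sum_left ci_scale_left)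
      also have "\<dots> = 0" using q k(1) by simp
      finally show "lv \<bullet> y = 0" by simp
    qed
  qed
  then have "lam j = 0" for j using lamreal[of j] unfolding lv_def by (simp add: vec_eq_iff)
  then have "T *v v = 0 *v v" for v unfolding Tv by simp
  then show "T = 0" using matrix_eq by blast
qed

theorem mainTheorem3:
  shows "(\<forall>(x :: nat \<Rightarrow> real ^ 'n) m. r_frame x m \<longrightarrow>
            (r_injective x m \<longleftrightarrow>
              (\<forall>e. r_onb e \<longrightarrow>
                 span ((\<lambda>k. \<chi> j. (x k \<bullet> e j)\<^sup>2) ` {1..m}) = (UNIV :: (real ^ 'n) set))))
       \<and> (\<forall>(x :: nat \<Rightarrow> complex ^ 'n) m. c_frame x m \<longrightarrow>
            (c_injective x m \<longleftrightarrow>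
              (\<forall>e. c_onb e \<longrightarrow>
                 span ((\<lambda>k. \<chi> j. (cmod (c_inner (x k) (e j)))\<^sup>2) ` {1..m})
                   = (UNIV :: (real ^ 'n) set))))"
proof -
  have R: "\<And>(x :: nat \<Rightarrow> real ^ 'n) m. r_injective x m \<longleftrightarrow>
              (\<forall>e. r_onb e \<longrightarrow>
                 span ((\<lambda>k. \<chi> j. (x k \<bullet> e j)\<^sup>2) ` {1..m}) = (UNIV :: (real ^ 'n) set))"
    using real_dir1 real_dir2 by blast
  have C: "\<And>(x :: nat \<Rightarrow> complex ^ 'n) m. c_injective x m \<longleftrightarrow>
              (\<forall>e. c_onb e \<longrightarrow>
                 span ((\<lambda>k. \<chi> j. (cmod (c_inner (x k) (e j)))\<^sup>2) ` {1..m})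
                   = (UNIV :: (real ^ 'n) set))"
    using complex_dir1 complex_dir2 by blast
  show ?thesis using R C by blast
qed

end
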